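(* Let $F,S_0,S_1,\ldots,S_m$ be formulas. If $\emptyset[F,S_1,\ldots,S_m]=\emptyset[S_1,\ldots,S_m]$, then $\emptyset[F,S_0,S_1,\ldots,S_m]=\emptyset[S_0,S_1,\ldots,S_m]$.
   Context: Propositional models are truth assignments over a finite set of variables; a formula used where a set of models is expected stands for its set of models. A doxastic state is a sequence $[C(0),\ldots,C(k)]$ of nonempty, pairwise disjoint sets of models covering all models. The flat doxastic state $\emptyset$ is $[\text{all models}]$. Lexicographic revision: $C\,\mathrm{lex}(A) = [C(0)\cap A,\ldots,C(k)\cap A, C(0)\setminus A,\ldots,C(k)\setminus A]$, empty sets discarded. $\emptyset[T_1,\ldots,T_n]$ denotes $\emptyset$ revised lexicographically by $T_1$, then $T_2$, ..., then $T_n$. *)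

theory Defs
  imports Main
begin

datatype 'v formula =
    FTrue | FFalse | Var 'v | Neg "'v formula"
  | Conj "'v formula" "'v formula" | Disj "'v formula" "'v formula"
  | Impl "'v formula" "'v formula"

type_synonym 'v model = "'v set"

fun sat :: "'v model \<Rightarrow> 'v formula \<Rightarrow> bool" where
  "sat M FTrue = True"
| "sat M FFalse = False"
| "sat M (Var x) = (x \<in> M)"
| "sat M (Neg f) = (\<not> sat M f)"
| "sat M (Conj f g) = (sat M f \<and> sat M g)"
| "sat M (Disj f g) = (sat M f \<or> sat M g)"
| "sat M (Impl f g) = (sat M f \<longrightarrow> sat M g)"

definition mods :: "'v formula \<Rightarrow> 'v model set" where
  "mods f = {M. sat M f}"

type_synonym 'v doxastic_state = "'v model set list"

definition doxastic_state :: "'v doxastic_state \<Rightarrow> bool" where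
  "doxastic_state C \<longleftrightarrow> (\<forall>c\<in>set C. c \<noteq> {}) \<and> \<Union>(set C) = UNIV
     \<and> (\<forall>i<length C. \<forall>j<length C. i \<noteq> j \<longrightarrow> C!i \<inter> C!j = {})"

definition flat :: "'v doxastic_state" where
  "flat = [UNIV]"

definition lex :: "'v doxastic_state \<Rightarrow> 'v formula \<Rightarrow> 'v doxastic_state" where
  "lex C A = filter (\<lambda>c. c \<noteq> {}) (map (\<lambda>c. c \<inter> mods A) C @ map (\<lambda>c. c - mods A) C)"

definition revs :: "'v doxastic_state \<Rightarrow> 'v formula list \<Rightarrow> 'v doxastic_state" where
  "revs C Ts = foldl lex C Ts"

end

theory Submission
  imports Defs
begin

definition low :: "'v model set list \<Rightarrow> 'v model set \<Rightarrow> 'v model set list" where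
  "low C X = filter (\<lambda>c. c \<noteq> {}) (concat (map (\<lambda>c. [c \<inter> X, c - X]) C))"

lemma filter_map_filter:
  assumes "f {} = {}"
  shows "filter (\<lambda>c. c \<noteq> {}) (map f (filter (\<lambda>c. c \<noteq> {}) xs)) = filter (\<lambda>c. c \<noteq> {}) (map f xs)"
  using assms by (induction xs) auto

lemma filter_concat_filter:
  "filter (\<lambda>c. c \<noteq> {}) (concat (map (\<lambda>c. [c \<inter> X, c - X]) (filter (\<lambda>c. c \<noteq> {}) xs)))
   = filter (\<lambda>c. c \<noteq> {}) (concat (map (\<lambda>c. [c \<inter> X, c - X]) xs))"
  by (induction xs) auto

lemma lex_low: "lex (low C X) A = low (lex C A) X"
proof -
  have e1: "filter (\<lambda>c. c \<noteq> {}) (map (\<lambda>c. c \<inter> Y) (concat (map (\<lambda>c. [c \<inter> X, c - X]) C)))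
     = filter (\<lambda>c. c \<noteq> {}) (concat (map (\<lambda>c. [c \<inter> Y \<inter> X, c \<inter> Y - X]) C))" for Y :: "'a model set"
    by (induction C) (auto simp: Int_ac Diff_Int_distrib2)
  have e2: "filter (\<lambda>c. c \<noteq> {}) (map (\<lambda>c. c - Y) (concat (map (\<lambda>c. [c \<inter> X, c - X]) C)))
     = filter (\<lambda>c. c \<noteq> {}) (concat (map (\<lambda>c. [(c - Y) \<inter> X, c - Y - X]) C))" for Y :: "'a model set"
    by (induction C) (auto simp: Int_ac Diff_Int_distrib2 Int_Diff Diff_eq)
  have e3: "filter (\<lambda>c. c \<noteq> {}) (concat (map (\<lambda>c. [c \<inter> X, c - X]) (map f C)))
     = filter (\<lambda>c. c \<noteq> {}) (concat (map (\<lambda>c. [f c \<inter> X, f c - X]) C))" for f :: "'a model set \<Rightarrow> 'a model set"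
    by (induction C) auto
  show ?thesis
    unfolding lex_def low_def
    by (simp add: filter_map_filter filter_concat_filter e1 e2 e3 o_def del: filter_map)
qed

lemma low_filter: "low (filter (\<lambda>c. c \<noteq> {}) C) X = low C X"
  unfolding low_def by (rule filter_concat_filter)

lemma lex_flat: "lex flat A = low flat (mods A)"
  unfolding lex_def low_def flat_def by auto

lemma foldl_low: "foldl lex (low C X) Ts = low (foldl lex C Ts) X"
  by (induction Ts arbitrary: C) (auto simp: lex_low)

lemma revs_cons: "revs flat (F # Ts) = low (revs flat Ts) (mods F)"
  unfolding revs_def by (simp add: lex_flat foldl_low)

lemma nonempty_lex: "\<forall>c\<in>set (lex C A). c \<noteq> {}"
  unfolding lex_def by auto

lemma nonempty_revs: "\<forall>c\<in>set (revs flat Ts). c \<noteq> {}"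
proof -
  have "\<forall>c\<in>set C. c \<noteq> {} \<Longrightarrow> \<forall>c\<in>set (foldl lex C Ts). c \<noteq> {}" for C :: "'a model set list"
    by (induction Ts arbitrary: C) (simp, metis nonempty_lex foldl_Cons)
  moreover have "\<forall>c\<in>set ([UNIV] :: 'a model set list). c \<noteq> {}" by simp
  ultimately show ?thesis unfolding revs_def flat_def by blast
qed

lemma low_Cons: "low (c # D) X = filter (\<lambda>c. c \<noteq> {}) [c \<inter> X, c - X] @ low D X"
proof -
  have "concat (map (\<lambda>c. [c \<inter> X, c - X]) (c # D)) = [c \<inter> X, c - X] @ concat (map (\<lambda>c. [c \<inter> X, c - X]) D)"
    by simp
  then show ?thesis unfolding low_def by (simp only: filter_append)
qed

lemma low_fixed:
  "\<forall>c\<in>set D. c \<noteq> {} \<Longrightarrow> low D X = D \<Longrightarrow> \<forall>c\<in>set D. c \<subseteq> X \<or> c \<inter> X = {}"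
proof (induction D)
  case Nil
  then show ?case by simp
next
  case (Cons c D)
  have eq: "filter (\<lambda>c. c \<noteq> {}) [c \<inter> X, c - X] @ low D X = c # D"
    using Cons.prems(2) low_Cons by metis
  show ?case
  proof (cases "c \<inter> X = {} \<or> c - X = {}")
    case True
    then have "filter (\<lambda>c. c \<noteq> {}) [c \<inter> X, c - X] = [c]"
      using Cons.prems(1) by (auto simp: Int_absorb2 Diff_triv)
    then have "low D X = D" using eq by simp
    then show ?thesis using Cons True by auto
  next
    case False
    then have "c \<inter> X = c" using eq by simp
    then show ?thesis using False by auto
  qed
qed

lemma low_split_free:
  "\<forall>c\<in>set E. c \<subseteq> X \<or> c \<inter> X = {} \<Longrightarrow> low E X = filter (\<lambda>c. c \<noteq> {}) E"
  unfolding low_def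
proof (induction E)
  case (Cons c E)
  then show ?case
    by (cases "c \<subseteq> X") (auto simp: Int_absorb2 Diff_triv)
qed simp

lemma set_low: "c \<in> set (low D Y) \<Longrightarrow> \<exists>d\<in>set D. c \<subseteq> d \<and> c \<noteq> {}"
  unfolding low_def by auto

theorem mainTheorem9:
  fixes F S0 :: "('v::finite) formula" and Ss :: "'v formula list"
  assumes "revs flat (F # Ss) = revs flat Ss"
  shows "revs flat (F # S0 # Ss) = revs flat (S0 # Ss)"
proof -
  define D where "D = revs flat Ss"
  have h: "low D (mods F) = D" using assms revs_cons D_def by metis
  have sp: "\<forall>c\<in>set D. c \<subseteq> mods F \<or> c \<inter> mods F = {}"
    using low_fixed[OF _ h] nonempty_revs D_def by blast
  have sp2: "\<forall>c\<in>set (low D (mods S0)). c \<subseteq> mods F \<or> c \<inter> mods F = {}"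
  proof
    fix c assume "c \<in> set (low D (mods S0))"
    then obtain d where "d \<in> set D" "c \<subseteq> d" using set_low by blast
    then show "c \<subseteq> mods F \<or> c \<inter> mods F = {}" using sp by blast
  qed
  have "revs flat (F # S0 # Ss) = low (low D (mods S0)) (mods F)"
    by (simp add: revs_cons D_def)
  also have "\<dots> = filter (\<lambda>c. c \<noteq> {}) (low D (mods S0))"
    using low_split_free[OF sp2] .
  also have "\<dots> = low D (mods S0)" unfolding low_def by simp
  also have "\<dots> = revs flat (S0 # Ss)" by (simp add: revs_cons D_def)
  finally show ?thesis .
qed

end
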